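(* Let $(J,S)$ be a homogeneous $d$-dimensional multi-time Markov renewal chain with semi-Markov kernel $q$. Then for all $i,j\in E$, $$g_{ij}=q_{ij}+\sum_{r\in E,\ r\ne j}q_{ir}*g_{rj}.$$
   Context: $E=\{1,\dots,s\}$. Convolution of real sequences on $\mathbb{N}^d$: $[a*b](k)=\sum_{l+l'=k}a(l)b(l')$. $\mathbb{N}^d$ has the componentwise partial order, $k<l$ meaning $k\le l$, $k\ne l$. A homogeneous $d$-dimensional multi-time Markov renewal chain is a process $(J_n,S_n)_{n\in\mathbb{N}}$, $J_n\in E$, $S_n\in\mathbb{N}^d$, $S_0=0_d$, $S_n<S_{n+1}$, with a.s. $\mathbb{P}(J_{n+1}=j,S_{n+1}-S_n=k\mid J_{0:n},S_{0:n})=q_{J_nj}(k)$, $q_{ij}(k)=\mathbb{P}(J_{n+1}=j,S_{n+1}-S_n=k\mid J_n=i)$ independent of $n$. $\mathbb{P}_i$: probability given $J_0=i$. With $m_j=\min\{l\ge1:J_l=j\}$, $g_{ij}(k)=\mathbb{P}_i(S_{m_j}=k)$, $k\in\mathbb{N}^d$. *)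

theory Defs
  imports "HOL-Probability.Probability"
begin

text \<open>Points of \<open>\<nat>^d\<close> are functions \<open>'d \<Rightarrow> nat\<close> for a finite index type \<open>'d\<close>
  (so \<open>d = CARD('d)\<close>); the componentwise order is the pointwise order on functions.
  The state space is \<open>E = {1..s}\<close>.\<close>

definition conv :: "(('d::finite \<Rightarrow> nat) \<Rightarrow> real) \<Rightarrow> (('d \<Rightarrow> nat) \<Rightarrow> real) \<Rightarrow> ('d \<Rightarrow> nat) \<Rightarrow> real" where
  "conv a b k = (\<Sum>(l, l') \<in> {(l, l'). (\<lambda>x. l x + l' x) = k}. a l * b l')"

text \<open>The a.s. conditional
  probability condition is written out for the discrete (countably-valued) history.\<close>

definition mrc :: "'a measure \<Rightarrow> nat \<Rightarrow> (nat \<Rightarrow> nat \<Rightarrow> ('d::finite \<Rightarrow> nat) \<Rightarrow> real)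
    \<Rightarrow> (nat \<Rightarrow> 'a \<Rightarrow> nat) \<Rightarrow> (nat \<Rightarrow> 'a \<Rightarrow> 'd \<Rightarrow> nat) \<Rightarrow> bool" where
  "mrc M s q J S \<longleftrightarrow>
     prob_space M \<and>
     (\<forall>n. J n \<in> M \<rightarrow>\<^sub>M count_space UNIV) \<and>
     (\<forall>n. S n \<in> M \<rightarrow>\<^sub>M count_space UNIV) \<and>
     (\<forall>n. \<forall>\<omega>\<in>space M. J n \<omega> \<in> {1..s}) \<and>
     (\<forall>\<omega>\<in>space M. S 0 \<omega> = (\<lambda>_. 0)) \<and>
     (\<forall>n. \<forall>\<omega>\<in>space M. S n \<omega> < S (Suc n) \<omega>) \<and>
     (\<forall>n (is :: nat \<Rightarrow> nat) (ts :: nat \<Rightarrow> 'd \<Rightarrow> nat) j k.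
        measure M {\<omega>\<in>space M. (\<forall>l\<le>n. J l \<omega> = is l \<and> S l \<omega> = ts l)
                      \<and> J (Suc n) \<omega> = j \<and> S (Suc n) \<omega> = (\<lambda>x. ts n x + k x)}
        = q (is n) j k * measure M {\<omega>\<in>space M. \<forall>l\<le>n. J l \<omega> = is l \<and> S l \<omega> = ts l})"

definition first_passage :: "'a measure \<Rightarrow> (nat \<Rightarrow> 'a \<Rightarrow> nat) \<Rightarrow> (nat \<Rightarrow> 'a \<Rightarrow> 'd \<Rightarrow> nat)
    \<Rightarrow> nat \<Rightarrow> ('d \<Rightarrow> nat) \<Rightarrow> real" where
  "first_passage M J S j k = measure M {\<omega>\<in>space M. (\<exists>l\<ge>1. J l \<omega> = j) \<and>
       S (LEAST l. l \<ge> 1 \<and> J l \<omega> = j) \<omega> = k}"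

end

theory Submission
  imports Defs
begin

definition sh :: "nat \<Rightarrow> (nat \<Rightarrow> nat) \<Rightarrow> nat \<Rightarrow> nat" where
  "sh i is m = (case m of 0 \<Rightarrow> i | Suc m' \<Rightarrow> is m')"
definition shT :: "('d \<Rightarrow> nat) \<Rightarrow> (nat \<Rightarrow> 'd \<Rightarrow> nat) \<Rightarrow> nat \<Rightarrow> 'd \<Rightarrow> nat" where
  "shT l ts m = (case m of 0 \<Rightarrow> (\<lambda>_. 0) | Suc m' \<Rightarrow> (\<lambda>x. l x + ts m' x))"

lemma sh_simps[simp]: "sh i is 0 = i" "sh i is (Suc m) = is m" "shT l ts 0 = (\<lambda>_. 0)" "shT l ts (Suc m) = (\<lambda>x. l x + ts m x)"
  by (auto simp: sh_def shT_def)

lemma mrcD: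
  assumes "mrc M s q J S"
  shows "prob_space M" "J n \<in> M \<rightarrow>\<^sub>M count_space UNIV" "S n \<in> M \<rightarrow>\<^sub>M count_space UNIV"
   "\<omega> \<in> space M \<Longrightarrow> J n \<omega> \<in> {1..s}" "\<omega> \<in> space M \<Longrightarrow> S 0 \<omega> = (\<lambda>_. 0)"
   "\<omega> \<in> space M \<Longrightarrow> S n \<omega> < S (Suc n) \<omega>"
   "measure M {\<omega>\<in>space M. (\<forall>l\<le>n. J l \<omega> = is l \<and> S l \<omega> = ts l)
                      \<and> J (Suc n) \<omega> = j \<and> S (Suc n) \<omega> = (\<lambda>x. ts n x + k x)}
        = q (is n) j k * measure M {\<omega>\<in>space M. \<forall>l\<le>n. J l \<omega> = is l \<and> S l \<omega> = ts l}"
  using assms unfolding mrc_def by blast+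

lemma S_mono:
  assumes "mrc M s q J S" "\<omega> \<in> space M" "m \<le> m'"
  shows "S m \<omega> \<le> S m' \<omega>"
  using assms(3)
proof (induction m' rule: dec_induct)
  case base then show ?case by simp
next
  case (step n)
  then show ?case using mrcD(6)[OF assms(1,2), of n] by (meson less_imp_le order_trans)
qed

lemma cyl_meas:
  assumes "mrc M s q J S"
  shows "{\<omega>\<in>space M. \<forall>m\<le>n. J m \<omega> = is m \<and> S m \<omega> = ts m} \<in> sets M"
proof -
  have [measurable]: "\<And>n. J n \<in> M \<rightarrow>\<^sub>M count_space UNIV" "\<And>n. S n \<in> M \<rightarrow>\<^sub>M count_space UNIV"
    using mrcD[OF assms] by auto
  show ?thesis by measurable
qed

lemma start_prob:
  assumes c: "mrc M s q J S" and a: "AE \<omega> in M. J 0 \<omega> = i"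
  shows "measure M {\<omega>\<in>space M. \<forall>m\<le>0. J m \<omega> = sh i is m \<and> S m \<omega> = shT l ts m} = 1"
proof -
  interpret prob_space M using mrcD(1)[OF c] .
  have "AE \<omega> in M. \<forall>m\<le>0. J m \<omega> = sh i is m \<and> S m \<omega> = shT l ts m"
    using a by (rule AE_mp) (auto intro!: AE_I2 dest: mrcD(5)[OF c])
  then show ?thesis using prob_Collect_eq_1[OF cyl_meas[OF c, of 0 "sh i is" "shT l ts"]] by simp
qed

lemma start_prob':
  assumes c: "mrc M s q J S" and a: "AE \<omega> in M. J 0 \<omega> = i" and "is 0 = i" "ts 0 = (\<lambda>_. 0)"
  shows "measure M {\<omega>\<in>space M. \<forall>m\<le>0. J m \<omega> = is m \<and> S m \<omega> = ts m} = 1"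
  using start_prob[OF c a, of "\<lambda>m. is (Suc m)" "\<lambda>_. 0" "\<lambda>m. ts (Suc m)"] assms(3,4)
  by simp

lemma all_le_Suc: "(\<forall>m\<le>Suc N. P m) = ((\<forall>m\<le>N. P m) \<and> P (Suc N))"
  by (auto simp: le_Suc_eq)

lemma cyl_shift:
  assumes c1: "mrc M1 s q J1 S1" and c2: "mrc M2 s q J2 S2"
   and a1: "AE \<omega> in M1. J1 0 \<omega> = i" and a2: "AE \<omega> in M2. J2 0 \<omega> = is 0"
   and t0: "ts 0 = (\<lambda>_. 0)"
  shows "measure M1 {\<omega>\<in>space M1. \<forall>m\<le>Suc n. J1 m \<omega> = sh i is m \<and> S1 m \<omega> = shT l ts m}
     = q i (is 0) l * measure M2 {\<omega>\<in>space M2. \<forall>m\<le>n. J2 m \<omega> = is m \<and> S2 m \<omega> = ts m}"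
proof (induction n)
  case 0
  have e: "{\<omega>\<in>space M1. \<forall>m\<le>Suc 0. J1 m \<omega> = sh i is m \<and> S1 m \<omega> = shT l ts m}
     = {\<omega>\<in>space M1. (\<forall>m\<le>0. J1 m \<omega> = sh i is m \<and> S1 m \<omega> = shT l ts m) \<and> J1 (Suc 0) \<omega> = is 0
          \<and> S1 (Suc 0) \<omega> = (\<lambda>x. shT l ts 0 x + l x)}"
    using t0 by (simp only: all_le_Suc) simp
  show ?case unfolding e mrcD(7)[OF c1] start_prob[OF c1 a1] start_prob'[OF c2 a2, of "is" ts, OF refl t0] by simp
next
  case (Suc n)
  show ?case
  proof (cases "ts n \<le> ts (Suc n)")
    case True
    define k where "k = (\<lambda>x. ts (Suc n) x - ts n x)"
    have k1: "(\<lambda>x. ts n x + k x) = ts (Suc n)" using True by (auto simp: k_def le_fun_def)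
    have k2: "(\<lambda>x. shT l ts (Suc n) x + k x) = shT l ts (Suc (Suc n))"
      using True by (auto simp: k_def le_fun_def)
    have e1: "{\<omega>\<in>space M1. \<forall>m\<le>Suc (Suc n). J1 m \<omega> = sh i is m \<and> S1 m \<omega> = shT l ts m}
     = {\<omega>\<in>space M1. (\<forall>m\<le>Suc n. J1 m \<omega> = sh i is m \<and> S1 m \<omega> = shT l ts m) \<and> J1 (Suc (Suc n)) \<omega> = is (Suc n)
          \<and> S1 (Suc (Suc n)) \<omega> = (\<lambda>x. shT l ts (Suc n) x + k x)}"
      unfolding k2 by (simp only: all_le_Suc sh_simps)
    have e2: "{\<omega>\<in>space M2. \<forall>m\<le>Suc n. J2 m \<omega> = is m \<and> S2 m \<omega> = ts m}
     = {\<omega>\<in>space M2. (\<forall>m\<le>n. J2 m \<omega> = is m \<and> S2 m \<omega> = ts m) \<and> J2 (Suc n) \<omega> = is (Suc n)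
          \<and> S2 (Suc n) \<omega> = (\<lambda>x. ts n x + k x)}"
      unfolding k1 by (simp only: all_le_Suc)
    show ?thesis unfolding e1 e2 mrcD(7)[OF c1] mrcD(7)[OF c2] Suc by simp
  next
    case False
    have e1: "{\<omega>\<in>space M1. \<forall>m\<le>Suc (Suc n). J1 m \<omega> = sh i is m \<and> S1 m \<omega> = shT l ts m} = {}"
    proof (safe)
      fix \<omega> assume w: "\<omega> \<in> space M1" and h: "\<forall>m\<le>Suc (Suc n). J1 m \<omega> = sh i is m \<and> S1 m \<omega> = shT l ts m"
      have "S1 (Suc n) \<omega> \<le> S1 (Suc (Suc n)) \<omega>" using mrcD(6)[OF c1 w, of "Suc n"] by simp
      moreover have "S1 (Suc n) \<omega> = shT l ts (Suc n)" "S1 (Suc (Suc n)) \<omega> = shT l ts (Suc (Suc n))" using h by auto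
      ultimately have "ts n \<le> ts (Suc n)" by (auto simp: le_fun_def)
      with False show "\<omega> \<in> {}" by simp
    qed
    have e2: "{\<omega>\<in>space M2. \<forall>m\<le>Suc n. J2 m \<omega> = is m \<and> S2 m \<omega> = ts m} = {}"
    proof (safe)
      fix \<omega> assume w: "\<omega> \<in> space M2" and h: "\<forall>m\<le>Suc n. J2 m \<omega> = is m \<and> S2 m \<omega> = ts m"
      have "S2 n \<omega> \<le> S2 (Suc n) \<omega>" using mrcD(6)[OF c2 w, of n] by simp
      moreover have "S2 n \<omega> = ts n" "S2 (Suc n) \<omega> = ts (Suc n)" using h by auto
      ultimately have "ts n \<le> ts (Suc n)" by auto
      with False show "\<omega> \<in> {}" by simp
    qed
    show ?thesis unfolding e1 e2 by simp
  qed
qed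

lemma count_transfer:
  fixes X :: "'a \<Rightarrow> 'c::countable" and Y :: "'b \<Rightarrow> 'c"
  assumes fM: "finite_measure M" and fN: "finite_measure N"
   and X: "X \<in> M \<rightarrow>\<^sub>M count_space UNIV" and Y: "Y \<in> N \<rightarrow>\<^sub>M count_space UNIV"
   and B: "B \<in> sets M" and c: "c \<ge> 0"
   and eq: "\<And>a. measure M ({\<omega>\<in>space M. X \<omega> = a} \<inter> B) = c * measure N {\<omega>\<in>space N. Y \<omega> = a}"
  shows "measure M ({\<omega>\<in>space M. X \<omega> \<in> A} \<inter> B) = c * measure N {\<omega>\<in>space N. Y \<omega> \<in> A}"
proof -
  have sX: "{\<omega>\<in>space M. X \<omega> = a} \<inter> B \<in> sets M" for a
    using X B by measurable
  have sY: "{\<omega>\<in>space N. Y \<omega> = a} \<in> sets N" for a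
    using Y by measurable
  have e1: "{\<omega>\<in>space M. X \<omega> \<in> A} \<inter> B = (\<Union>a\<in>A. {\<omega>\<in>space M. X \<omega> = a} \<inter> B)" by auto
  have e2: "{\<omega>\<in>space N. Y \<omega> \<in> A} = (\<Union>a\<in>A. {\<omega>\<in>space N. Y \<omega> = a})" by auto
  have "emeasure M ({\<omega>\<in>space M. X \<omega> \<in> A} \<inter> B) = (\<integral>\<^sup>+a. emeasure M ({\<omega>\<in>space M. X \<omega> = a} \<inter> B) \<partial>count_space A)"
    unfolding e1 by (rule emeasure_UN_countable) (auto simp: sX disjoint_family_on_def)
  also have "\<dots> = (\<integral>\<^sup>+a. ennreal c * emeasure N {\<omega>\<in>space N. Y \<omega> = a} \<partial>count_space A)"
    apply (rule nn_integral_cong)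
    using eq c by (simp add: finite_measure.emeasure_eq_measure[OF fM] finite_measure.emeasure_eq_measure[OF fN] ennreal_mult)
  also have "\<dots> = ennreal c * (\<integral>\<^sup>+a. emeasure N {\<omega>\<in>space N. Y \<omega> = a} \<partial>count_space A)"
    by (rule nn_integral_cmult) simp
  also have "(\<integral>\<^sup>+a. emeasure N {\<omega>\<in>space N. Y \<omega> = a} \<partial>count_space A) = emeasure N {\<omega>\<in>space N. Y \<omega> \<in> A}"
    unfolding e2 by (rule emeasure_UN_countable[symmetric]) (auto simp: sY disjoint_family_on_def)
  finally show ?thesis
    using c by (simp add: finite_measure.emeasure_eq_measure[OF fM] finite_measure.emeasure_eq_measure[OF fN] ennreal_mult[symmetric] measure_nonneg)
qed

definition F0 :: "(nat \<Rightarrow> 'a \<Rightarrow> nat) \<Rightarrow> (nat \<Rightarrow> 'a \<Rightarrow> 'd \<Rightarrow> nat) \<Rightarrow> nat \<Rightarrow> 'a \<Rightarrow> nat \<times> ('d \<Rightarrow> nat)" where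
  "F0 J S m \<omega> = (J m \<omega>, S m \<omega>)"
definition F1 :: "(nat \<Rightarrow> 'a \<Rightarrow> nat) \<Rightarrow> (nat \<Rightarrow> 'a \<Rightarrow> 'd \<Rightarrow> nat) \<Rightarrow> nat \<Rightarrow> 'a \<Rightarrow> nat \<times> ('d \<Rightarrow> nat)" where
  "F1 J S m \<omega> = (J (Suc m) \<omega>, (\<lambda>x. S (Suc m) \<omega> x - S 1 \<omega> x))"
definition pre :: "(nat \<Rightarrow> 'a \<Rightarrow> 'b) \<Rightarrow> nat \<Rightarrow> 'a \<Rightarrow> 'b list" where
  "pre F n \<omega> = map (\<lambda>m. F m \<omega>) [0..<Suc n]"
definition hitF :: "(nat \<Rightarrow> 'a \<Rightarrow> nat \<times> 'c) \<Rightarrow> nat \<Rightarrow> nat \<Rightarrow> 'c \<Rightarrow> 'a \<Rightarrow> bool" where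
  "hitF F j n k \<omega> \<longleftrightarrow> 1 \<le> n \<and> (\<forall>m. 1 \<le> m \<and> m < n \<longrightarrow> fst (F m \<omega>) \<noteq> j) \<and> fst (F n \<omega>) = j \<and> snd (F n \<omega>) = k"
definition hitA :: "nat \<Rightarrow> nat \<Rightarrow> 'c \<Rightarrow> (nat \<times> 'c) list set" where
  "hitA j n k = {a. length a = Suc n \<and> 1 \<le> n \<and> (\<forall>m. 1 \<le> m \<and> m < n \<longrightarrow> fst (a ! m) \<noteq> j) \<and> fst (a ! n) = j \<and> snd (a ! n) = k}"

lemma pre_eq: "pre F n \<omega> = a \<longleftrightarrow> length a = Suc n \<and> (\<forall>m\<le>n. F m \<omega> = a ! m)"
  unfolding pre_def by (auto simp: list_eq_iff_nth_eq nth_map less_Suc_eq_le simp del: upt_Suc)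

lemma hit_pre: "hitF F j n k \<omega> \<longleftrightarrow> pre F n \<omega> \<in> hitA j n k"
  unfolding hitF_def hitA_def pre_def by (auto simp: nth_map simp del: upt_Suc)

lemma hit_disj: "hitF F j n k \<omega> \<Longrightarrow> hitF F j n' k' \<omega> \<Longrightarrow> n = n'"
  unfolding hitF_def by (metis linorder_neqE_nat)

lemma pair_meas:
  fixes f :: "'a \<Rightarrow> 'b::countable" and g :: "'a \<Rightarrow> 'c::countable"
  assumes "f \<in> M \<rightarrow>\<^sub>M count_space UNIV" "g \<in> M \<rightarrow>\<^sub>M count_space UNIV"
  shows "(\<lambda>\<omega>. (f \<omega>, g \<omega>)) \<in> M \<rightarrow>\<^sub>M count_space UNIV"
proof -
  have [measurable]: "f \<in> M \<rightarrow>\<^sub>M count_space UNIV" "g \<in> M \<rightarrow>\<^sub>M count_space UNIV" using assms by auto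
  have "(\<lambda>\<omega>. (f \<omega>, g \<omega>)) -` {(a, b)} \<inter> space M = {\<omega>\<in>space M. f \<omega> = a \<and> g \<omega> = b}" for a b by auto
  moreover have "{\<omega>\<in>space M. f \<omega> = a \<and> g \<omega> = b} \<in> sets M" for a b by measurable
  ultimately show ?thesis unfolding measurable_count_space_eq2_countable by auto
qed

lemma F0_meas: "mrc M s q J S \<Longrightarrow> F0 J S m \<in> M \<rightarrow>\<^sub>M count_space UNIV"
  unfolding F0_def[abs_def] by (intro pair_meas mrcD(2,3))

lemma F1_meas:
  assumes "mrc M s q J S" shows "F1 J S m \<in> M \<rightarrow>\<^sub>M count_space UNIV"
proof -
  have "(\<lambda>\<omega>. (J (Suc m) \<omega>, S (Suc m) \<omega>, S 1 \<omega>)) \<in> M \<rightarrow>\<^sub>M count_space UNIV"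
    by (intro pair_meas mrcD(2,3)[OF assms])
  then have "(\<lambda>p. (fst p, (\<lambda>x. fst (snd p) x - snd (snd p) x))) \<circ> (\<lambda>\<omega>. (J (Suc m) \<omega>, S (Suc m) \<omega>, S 1 \<omega>)) \<in> M \<rightarrow>\<^sub>M count_space UNIV"
    by (intro measurable_comp[where N="count_space UNIV"]) auto
  then show ?thesis unfolding F1_def[abs_def] o_def by simp
qed

lemma pre_meas:
  fixes F :: "nat \<Rightarrow> 'a \<Rightarrow> 'b::countable"
  assumes "\<And>m. F m \<in> M \<rightarrow>\<^sub>M count_space UNIV"
  shows "pre F n \<in> M \<rightarrow>\<^sub>M count_space UNIV"
proof -
  have [measurable]: "\<And>m. F m \<in> M \<rightarrow>\<^sub>M count_space UNIV" using assms by auto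
  have "pre F n -` {a} \<inter> space M = (if length a = Suc n then {\<omega>\<in>space M. \<forall>m\<le>n. F m \<omega> = a ! m} else {})" for a
    by (rule set_eqI) (auto simp: pre_eq)
  moreover have "{\<omega>\<in>space M. \<forall>m\<le>n. F m \<omega> = a ! m} \<in> sets M" for a by measurable
  ultimately show ?thesis unfolding measurable_count_space_eq2_countable by auto
qed

lemma hit_meas:
  fixes F :: "nat \<Rightarrow> 'a \<Rightarrow> nat \<times> 'c::countable"
  assumes "\<And>m. F m \<in> M \<rightarrow>\<^sub>M count_space UNIV"
  shows "{\<omega>\<in>space M. hitF F j n k \<omega>} \<in> sets M" "{\<omega>\<in>space M. \<exists>n. hitF F j n k \<omega>} \<in> sets M"
proof -
  have "{\<omega>\<in>space M. hitF F j n k \<omega>} = pre F n -` hitA j n k \<inter> space M" for n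
    by (auto simp: hit_pre)
  then show 1: "{\<omega>\<in>space M. hitF F j n k \<omega>} \<in> sets M" for n
    using measurable_sets[OF pre_meas[OF assms, where n=n], of "hitA j n k"] by simp
  have "{\<omega>\<in>space M. \<exists>n. hitF F j n k \<omega>} = (\<Union>n. {\<omega>\<in>space M. hitF F j n k \<omega>})" by auto
  then show "{\<omega>\<in>space M. \<exists>n. hitF F j n k \<omega>} \<in> sets M" using 1 by auto
qed

lemma q_nonneg:
  assumes c: "mrc M s q J S" and a: "AE \<omega> in M. J 0 \<omega> = i"
  shows "q i r l \<ge> 0"
proof -
  have h1: "measure M {\<omega>\<in>space M. (\<forall>m\<le>0. J m \<omega> = (\<lambda>_. i) m \<and> S m \<omega> = (\<lambda>_ _. 0) m)
                      \<and> J (Suc 0) \<omega> = r \<and> S (Suc 0) \<omega> = (\<lambda>x. (\<lambda>_ _. 0) 0 x + l x)}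
        = q ((\<lambda>_. i) 0) r l * measure M {\<omega>\<in>space M. \<forall>m\<le>0. J m \<omega> = (\<lambda>_. i) m \<and> S m \<omega> = (\<lambda>_ _. 0) m}"
    by (rule mrcD(7)[OF c])
  have h2: "measure M {\<omega>\<in>space M. \<forall>m\<le>0. J m \<omega> = (\<lambda>_. i) m \<and> S m \<omega> = (\<lambda>_ _. 0) m} = 1"
    by (rule start_prob'[OF c a]) auto
  have "q i r l = measure M {\<omega>\<in>space M. (\<forall>m\<le>0. J m \<omega> = (\<lambda>_. i) m \<and> S m \<omega> = (\<lambda>_ _. 0) m)
                      \<and> J (Suc 0) \<omega> = r \<and> S (Suc 0) \<omega> = (\<lambda>x. (\<lambda>_ _. 0) 0 x + l x)}"
    using h1 h2 by simp
  then show ?thesis using measure_nonneg[of M] by simp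
qed

lemma pre_transfer:
  assumes c1: "mrc M1 s q J1 S1" and c2: "mrc M2 s q J2 S2"
   and a1: "AE \<omega> in M1. J1 0 \<omega> = i" and a2: "AE \<omega> in M2. J2 0 \<omega> = r"
  shows "measure M1 ({\<omega>\<in>space M1. pre (F1 J1 S1) n \<omega> = a} \<inter> {\<omega>\<in>space M1. J1 0 \<omega> = i \<and> J1 1 \<omega> = r \<and> S1 1 \<omega> = l})
    = q i r l * measure M2 {\<omega>\<in>space M2. pre (F0 J2 S2) n \<omega> = a}"
proof (cases "length a = Suc n")
  case False
  then show ?thesis by (auto simp: pre_eq)
next
  case len: True
  define "is" where "is = (\<lambda>m. fst (a ! m))"
  define ts where "ts = (\<lambda>m. snd (a ! m))"
  have am: "a ! m = (is m, ts m)" for m by (simp add: is_def ts_def)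
  interpret p2: prob_space M2 using mrcD(1)[OF c2] .
  show ?thesis
  proof (cases "is 0 = r \<and> ts 0 = (\<lambda>_. 0)")
    case True
    have e1: "{\<omega>\<in>space M1. pre (F1 J1 S1) n \<omega> = a} \<inter> {\<omega>\<in>space M1. J1 0 \<omega> = i \<and> J1 1 \<omega> = r \<and> S1 1 \<omega> = l}
       = {\<omega>\<in>space M1. \<forall>m\<le>Suc n. J1 m \<omega> = sh i is m \<and> S1 m \<omega> = shT l ts m}"
    proof (rule set_eqI, rule iffI)
      fix \<omega> assume "\<omega> \<in> {\<omega>\<in>space M1. pre (F1 J1 S1) n \<omega> = a} \<inter> {\<omega>\<in>space M1. J1 0 \<omega> = i \<and> J1 1 \<omega> = r \<and> S1 1 \<omega> = l}"
      then have w: "\<omega> \<in> space M1" and h: "\<forall>m\<le>n. J1 (Suc m) \<omega> = is m \<and> (\<lambda>x. S1 (Suc m) \<omega> x - S1 1 \<omega> x) = ts m"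
        and h0: "J1 0 \<omega> = i" "J1 1 \<omega> = r" "S1 1 \<omega> = l"
        by (auto simp: pre_eq am F1_def)
      have "J1 m \<omega> = sh i is m \<and> S1 m \<omega> = shT l ts m" if "m \<le> Suc n" for m
      proof (cases m)
        case 0 then show ?thesis using h0 mrcD(5)[OF c1 w] by simp
      next
        case (Suc m')
        have le: "S1 1 \<omega> \<le> S1 (Suc m') \<omega>" by (rule S_mono[OF c1 w]) simp
        have hh: "(\<lambda>x. S1 (Suc m') \<omega> x - S1 1 \<omega> x) = ts m'" "J1 (Suc m') \<omega> = is m'" using h that Suc by auto
        have "S1 (Suc m') \<omega> x = l x + ts m' x" for x
          using fun_cong[OF hh(1), of x] le_funD[OF le, of x] h0(3) by simp
        then have "S1 (Suc m') \<omega> = shT l ts (Suc m')" by auto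
        then show ?thesis using \<open>J1 (Suc m') \<omega> = is m'\<close> Suc by simp
      qed
      then show "\<omega> \<in> {\<omega>\<in>space M1. \<forall>m\<le>Suc n. J1 m \<omega> = sh i is m \<and> S1 m \<omega> = shT l ts m}" using w by auto
    next
      fix \<omega> assume "\<omega> \<in> {\<omega>\<in>space M1. \<forall>m\<le>Suc n. J1 m \<omega> = sh i is m \<and> S1 m \<omega> = shT l ts m}"
      then have w: "\<omega> \<in> space M1" and h: "\<And>m. m \<le> Suc n \<Longrightarrow> J1 m \<omega> = sh i is m \<and> S1 m \<omega> = shT l ts m" by auto
      have h1: "J1 1 \<omega> = r" "S1 1 \<omega> = l" using h[of 1] True by auto
      have "F1 J1 S1 m \<omega> = a ! m" if "m \<le> n" for m
        using h[of "Suc m"] h1 that by (auto simp: F1_def am)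
      then show "\<omega> \<in> {\<omega>\<in>space M1. pre (F1 J1 S1) n \<omega> = a} \<inter> {\<omega>\<in>space M1. J1 0 \<omega> = i \<and> J1 1 \<omega> = r \<and> S1 1 \<omega> = l}"
        using w h1 h[of 0] len by (auto simp: pre_eq)
    qed
    have e2: "{\<omega>\<in>space M2. pre (F0 J2 S2) n \<omega> = a} = {\<omega>\<in>space M2. \<forall>m\<le>n. J2 m \<omega> = is m \<and> S2 m \<omega> = ts m}"
      using len by (auto simp: pre_eq am F0_def)
    have a2': "AE \<omega> in M2. J2 0 \<omega> = is 0" using a2 True by simp
    have "ts 0 = (\<lambda>_. 0)" using True by simp
    note cs = cyl_shift[OF c1 c2 a1, of "is" ts, OF a2' this, of n l]
    show ?thesis unfolding e1 e2 cs using True by simp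
  next
    case False
    have e1: "{\<omega>\<in>space M1. pre (F1 J1 S1) n \<omega> = a} \<inter> {\<omega>\<in>space M1. J1 0 \<omega> = i \<and> J1 1 \<omega> = r \<and> S1 1 \<omega> = l} = {}"
    proof (rule equals0I)
      fix \<omega> assume "\<omega> \<in> {\<omega>\<in>space M1. pre (F1 J1 S1) n \<omega> = a} \<inter> {\<omega>\<in>space M1. J1 0 \<omega> = i \<and> J1 1 \<omega> = r \<and> S1 1 \<omega> = l}"
      then have "F1 J1 S1 0 \<omega> = a ! 0" "J1 1 \<omega> = r" by (auto simp: pre_eq)
      then have "is 0 = r \<and> ts 0 = (\<lambda>_. 0)" by (simp add: F1_def am)
      with False show False by simp
    qed
    have e2: "measure M2 {\<omega>\<in>space M2. pre (F0 J2 S2) n \<omega> = a} = 0"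
    proof -
      have "measure M2 {\<omega>\<in>space M2. pre (F0 J2 S2) n \<omega> = a} = measure M2 {}"
      proof (rule p2.finite_measure_eq_AE)
        show "AE \<omega> in M2. (\<omega> \<in> {\<omega>\<in>space M2. pre (F0 J2 S2) n \<omega> = a}) = (\<omega> \<in> {})"
        proof (rule AE_mp[OF a2], rule AE_I2, rule impI)
          fix \<omega> assume w: "\<omega> \<in> space M2" "J2 0 \<omega> = r"
          have "pre (F0 J2 S2) n \<omega> \<noteq> a"
          proof
            assume "pre (F0 J2 S2) n \<omega> = a"
            then have "F0 J2 S2 0 \<omega> = a ! 0" "J2 0 \<omega> = r" "S2 0 \<omega> = (\<lambda>_. 0)" using w by (auto simp: pre_eq dest: mrcD(5)[OF c2])
            then have "is 0 = r \<and> ts 0 = (\<lambda>_. 0)" by (simp add: F0_def am)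
            with False show False by simp
          qed
          then show "(\<omega> \<in> {\<omega>\<in>space M2. pre (F0 J2 S2) n \<omega> = a}) = (\<omega> \<in> {})" by simp
        qed
        show "{\<omega>\<in>space M2. pre (F0 J2 S2) n \<omega> = a} \<in> sets M2"
        proof -
          have "{\<omega>\<in>space M2. pre (F0 J2 S2) n \<omega> = a} = pre (F0 J2 S2) n -` {a} \<inter> space M2" by auto
          then show ?thesis using measurable_sets[OF pre_meas[OF F0_meas[OF c2]], of "{a}"] by simp
        qed
      qed simp
      then show ?thesis by simp
    qed
    show ?thesis unfolding e1 e2 by simp
  qed
qed

lemma fp_shift:
  assumes c1: "mrc M1 s q J1 S1" and c2: "mrc M2 s q J2 S2"
   and a1: "AE \<omega> in M1. J1 0 \<omega> = i" and a2: "AE \<omega> in M2. J2 0 \<omega> = r"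
  shows "measure M1 ({\<omega>\<in>space M1. \<exists>n. hitF (F1 J1 S1) j n l' \<omega>} \<inter> {\<omega>\<in>space M1. J1 0 \<omega> = i \<and> J1 1 \<omega> = r \<and> S1 1 \<omega> = l})
    = q i r l * measure M2 {\<omega>\<in>space M2. \<exists>n. hitF (F0 J2 S2) j n l' \<omega>}"
proof -
  define B where "B = {\<omega>\<in>space M1. J1 0 \<omega> = i \<and> J1 1 \<omega> = r \<and> S1 1 \<omega> = l}"
  interpret p1: prob_space M1 using mrcD(1)[OF c1] .
  interpret p2: prob_space M2 using mrcD(1)[OF c2] .
  have Bm: "B \<in> sets M1"
  proof -
    have [measurable]: "\<And>n. J1 n \<in> M1 \<rightarrow>\<^sub>M count_space UNIV" "\<And>n. S1 n \<in> M1 \<rightarrow>\<^sub>M count_space UNIV"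
      using mrcD[OF c1] by auto
    show ?thesis unfolding B_def by measurable
  qed
  have hn: "measure M1 ({\<omega>\<in>space M1. hitF (F1 J1 S1) j n l' \<omega>} \<inter> B) = q i r l * measure M2 {\<omega>\<in>space M2. hitF (F0 J2 S2) j n l' \<omega>}" for n
  proof -
    have "measure M1 ({\<omega>\<in>space M1. pre (F1 J1 S1) n \<omega> \<in> hitA j n l'} \<inter> B) = q i r l * measure M2 {\<omega>\<in>space M2. pre (F0 J2 S2) n \<omega> \<in> hitA j n l'}"
      by (rule count_transfer[OF p1.finite_measure_axioms p2.finite_measure_axioms pre_meas[OF F1_meas[OF c1]] pre_meas[OF F0_meas[OF c2]] Bm q_nonneg[OF c1 a1]])
         (unfold B_def, rule pre_transfer[OF c1 c2 a1 a2])
    then show ?thesis by (simp add: hit_pre)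
  qed
  define A1 where "A1 = (\<lambda>n. {\<omega>\<in>space M1. hitF (F1 J1 S1) j n l' \<omega>} \<inter> B)"
  define A2 where "A2 = (\<lambda>n. {\<omega>\<in>space M2. hitF (F0 J2 S2) j n l' \<omega>})"
  have s1: "(\<lambda>n. measure M1 (A1 n)) sums measure M1 (\<Union>n. A1 n)"
    by (rule p1.finite_measure_UNION)
       (auto simp: A1_def Bm hit_meas[OF F1_meas[OF c1]] disjoint_family_on_def dest: hit_disj)
  have s2: "(\<lambda>n. measure M2 (A2 n)) sums measure M2 (\<Union>n. A2 n)"
    by (rule p2.finite_measure_UNION)
       (auto simp: A2_def hit_meas[OF F0_meas[OF c2]] disjoint_family_on_def dest: hit_disj)
  have "(\<lambda>n. measure M1 (A1 n)) sums (q i r l * measure M2 (\<Union>n. A2 n))"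
    using sums_mult[OF s2, of "q i r l"] by (simp add: A1_def A2_def hn)
  then have "measure M1 (\<Union>n. A1 n) = q i r l * measure M2 (\<Union>n. A2 n)"
    using s1 sums_unique2 by blast
  moreover have "(\<Union>n. A1 n) = {\<omega>\<in>space M1. \<exists>n. hitF (F1 J1 S1) j n l' \<omega>} \<inter> B" by (auto simp: A1_def)
  moreover have "(\<Union>n. A2 n) = {\<omega>\<in>space M2. \<exists>n. hitF (F0 J2 S2) j n l' \<omega>}" by (auto simp: A2_def)
  ultimately show ?thesis by (simp add: B_def)
qed

lemma fp_char: "first_passage M J S j k = measure M {\<omega>\<in>space M. \<exists>n. hitF (F0 J S) j n k \<omega>}"
  unfolding first_passage_def
proof (rule arg_cong[where f="measure M"], rule Collect_cong, rule conj_cong[OF refl], rule iffI)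
  fix \<omega> assume h: "(\<exists>l\<ge>1. J l \<omega> = j) \<and> S (LEAST l. l \<ge> 1 \<and> J l \<omega> = j) \<omega> = k"
  define n where "n = (LEAST l. l \<ge> 1 \<and> J l \<omega> = j)"
  have 1: "n \<ge> 1 \<and> J n \<omega> = j" unfolding n_def using h by (metis (mono_tags, lifting) LeastI)
  have 2: "J m \<omega> \<noteq> j" if "1 \<le> m" "m < n" for m
    using not_less_Least[of m "\<lambda>l. l \<ge> 1 \<and> J l \<omega> = j"] that unfolding n_def by blast
  show "\<exists>n. hitF (F0 J S) j n k \<omega>"
  proof
    have "S n \<omega> = k" using h by (simp add: n_def)
    then show "hitF (F0 J S) j n k \<omega>" unfolding hitF_def F0_def using 1 2 by auto
  qed
next
  fix \<omega> assume "\<exists>n. hitF (F0 J S) j n k \<omega>"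
  then obtain n where h: "1 \<le> n" "\<And>m. 1 \<le> m \<Longrightarrow> m < n \<Longrightarrow> J m \<omega> \<noteq> j" "J n \<omega> = j" "S n \<omega> = k"
    by (auto simp: hitF_def F0_def)
  have "(LEAST l. l \<ge> 1 \<and> J l \<omega> = j) = n"
    by (rule Least_equality) (use h in \<open>auto simp: not_less[symmetric]\<close>)
  then show "(\<exists>l\<ge>1. J l \<omega> = j) \<and> S (LEAST l. l \<ge> 1 \<and> J l \<omega> = j) \<omega> = k" using h by auto
qed

lemma hit_split:
  assumes mono: "\<And>m m'. m \<le> m' \<Longrightarrow> S m \<omega> \<le> S m' \<omega>"
  shows "(\<exists>n. hitF (F0 J S) j n k \<omega>) \<longleftrightarrow> (J 1 \<omega> = j \<and> S 1 \<omega> = k) \<or>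
     (J 1 \<omega> \<noteq> j \<and> (\<exists>l'. (\<lambda>x. S 1 \<omega> x + l' x) = k \<and> (\<exists>n. hitF (F1 J S) j n l' \<omega>)))"
proof
  assume "\<exists>n. hitF (F0 J S) j n k \<omega>"
  then obtain n where h: "1 \<le> n" "\<And>m. 1 \<le> m \<Longrightarrow> m < n \<Longrightarrow> J m \<omega> \<noteq> j" "J n \<omega> = j" "S n \<omega> = k"
    by (auto simp: hitF_def F0_def)
  show "(J 1 \<omega> = j \<and> S 1 \<omega> = k) \<or> (J 1 \<omega> \<noteq> j \<and> (\<exists>l'. (\<lambda>x. S 1 \<omega> x + l' x) = k \<and> (\<exists>n. hitF (F1 J S) j n l' \<omega>)))"
  proof (cases "n = 1")
    case True then show ?thesis using h by auto
  next
    case False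
    then obtain n' where n': "n = Suc n'" "1 \<le> n'" using h(1) by (cases n) auto
    define l' where "l' = (\<lambda>x. S n \<omega> x - S 1 \<omega> x)"
    have le: "S 1 \<omega> \<le> S n \<omega>" using mono h(1) by blast
    have "(\<lambda>x. S 1 \<omega> x + l' x) = k" using le h(4) by (auto simp: l'_def le_fun_def fun_eq_iff)
    moreover have "hitF (F1 J S) j n' l' \<omega>"
      unfolding hitF_def F1_def using n' h by (auto simp: l'_def)
    moreover have "J 1 \<omega> \<noteq> j" using h(2)[of 1] n' by auto
    ultimately show ?thesis by blast
  qed
next
  assume "(J 1 \<omega> = j \<and> S 1 \<omega> = k) \<or> (J 1 \<omega> \<noteq> j \<and> (\<exists>l'. (\<lambda>x. S 1 \<omega> x + l' x) = k \<and> (\<exists>n. hitF (F1 J S) j n l' \<omega>)))"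
  then show "\<exists>n. hitF (F0 J S) j n k \<omega>"
  proof
    assume "J 1 \<omega> = j \<and> S 1 \<omega> = k"
    then have "hitF (F0 J S) j 1 k \<omega>" by (auto simp: hitF_def F0_def)
    then show ?thesis by blast
  next
    assume "J 1 \<omega> \<noteq> j \<and> (\<exists>l'. (\<lambda>x. S 1 \<omega> x + l' x) = k \<and> (\<exists>n. hitF (F1 J S) j n l' \<omega>))"
    then obtain l' n where h: "J 1 \<omega> \<noteq> j" "(\<lambda>x. S 1 \<omega> x + l' x) = k" "1 \<le> n"
      "\<And>m. 1 \<le> m \<Longrightarrow> m < n \<Longrightarrow> J (Suc m) \<omega> \<noteq> j" "J (Suc n) \<omega> = j" "(\<lambda>x. S (Suc n) \<omega> x - S 1 \<omega> x) = l'"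
      by (auto simp: hitF_def F1_def)
    have le: "S 1 \<omega> \<le> S (Suc n) \<omega>" using mono by simp
    have "S (Suc n) \<omega> x = k x" for x
      using fun_cong[OF h(2), of x] fun_cong[OF h(6), of x] le_funD[OF le, of x] by simp
    then have k: "S (Suc n) \<omega> = k" by auto
    have "J m \<omega> \<noteq> j" if "1 \<le> m" "m < Suc n" for m
    proof (cases m)
      case 0 then show ?thesis using that by simp
    next
      case (Suc m') then show ?thesis using that h(1) h(4)[of m'] by (cases "m' = 0") auto
    qed
    then have "hitF (F0 J S) j (Suc n) k \<omega>" using h(5) k by (auto simp: hitF_def F0_def)
    then show ?thesis by blast
  qed
qed


lemma q_eq:
  assumes c: "mrc M s q J S" and a: "AE \<omega> in M. J 0 \<omega> = i"
  shows "measure M {\<omega>\<in>space M. J 0 \<omega> = i \<and> J 1 \<omega> = r \<and> S 1 \<omega> = l} = q i r l"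
proof -
  have h1: "measure M {\<omega>\<in>space M. (\<forall>m\<le>0. J m \<omega> = (\<lambda>_. i) m \<and> S m \<omega> = (\<lambda>_ _. 0) m)
                      \<and> J (Suc 0) \<omega> = r \<and> S (Suc 0) \<omega> = (\<lambda>x. (\<lambda>_ _. 0) 0 x + l x)}
        = q ((\<lambda>_. i) 0) r l * measure M {\<omega>\<in>space M. \<forall>m\<le>0. J m \<omega> = (\<lambda>_. i) m \<and> S m \<omega> = (\<lambda>_ _. 0) m}"
    by (rule mrcD(7)[OF c])
  have h2: "measure M {\<omega>\<in>space M. \<forall>m\<le>0. J m \<omega> = (\<lambda>_. i) m \<and> S m \<omega> = (\<lambda>_ _. 0) m} = 1"
    by (rule start_prob'[OF c a]) auto
  have e: "{\<omega>\<in>space M. (\<forall>m\<le>0. J m \<omega> = (\<lambda>_. i) m \<and> S m \<omega> = (\<lambda>_ _. 0) m)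
                      \<and> J (Suc 0) \<omega> = r \<and> S (Suc 0) \<omega> = (\<lambda>x. (\<lambda>_ _. 0) 0 x + l x)}
     = {\<omega>\<in>space M. J 0 \<omega> = i \<and> J 1 \<omega> = r \<and> S 1 \<omega> = l}"
    by (auto dest: mrcD(5)[OF c])
  show ?thesis using h1 h2 unfolding e by simp
qed

lemma hit_val: "hitF F j n k \<omega> \<Longrightarrow> hitF F j n k' \<omega> \<Longrightarrow> k = k'"
  unfolding hitF_def by simp

theorem proposition11:
  fixes s :: nat
    and q :: "nat \<Rightarrow> nat \<Rightarrow> ('d::finite \<Rightarrow> nat) \<Rightarrow> real"
    and M :: "nat \<Rightarrow> 'a measure"
    and J :: "nat \<Rightarrow> nat \<Rightarrow> 'a \<Rightarrow> nat"
    and S :: "nat \<Rightarrow> nat \<Rightarrow> 'a \<Rightarrow> 'd \<Rightarrow> nat"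
  assumes chain: "\<And>i. i \<in> {1..s} \<Longrightarrow> mrc (M i) s q (J i) (S i)"
    and start: "\<And>i. i \<in> {1..s} \<Longrightarrow> AE \<omega> in M i. J i 0 \<omega> = i"
    and i: "i \<in> {1..s}" and j: "j \<in> {1..s}"
  shows "first_passage (M i) (J i) (S i) j k =
           q i j k + (\<Sum>r \<in> {1..s} - {j}. conv (q i r) (first_passage (M r) (J r) (S r) j) k)"
proof -
  have ci: "mrc (M i) s q (J i) (S i)" using chain[OF i] .
  have ai: "AE \<omega> in M i. J i 0 \<omega> = i" using start[OF i] .
  interpret p: prob_space "M i" using mrcD(1)[OF ci] .
  have [measurable]: "\<And>n. J i n \<in> M i \<rightarrow>\<^sub>M count_space UNIV" "\<And>n. S i n \<in> M i \<rightarrow>\<^sub>M count_space UNIV"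
    using mrcD[OF ci] by auto
  define P where "P = {(l :: 'd \<Rightarrow> nat, l'). (\<lambda>x. l x + l' x) = k}"
  have finP: "finite P"
  proof -
    have "P \<subseteq> (Pi UNIV (\<lambda>x. {..k x})) \<times> (Pi UNIV (\<lambda>x. {..k x}))"
    proof
      fix t assume "t \<in> P"
      then obtain l l' where t: "t = (l, l')" "(\<lambda>x. l x + l' x) = k" by (auto simp: P_def)
      have "l x \<le> k x" "l' x \<le> k x" for x using fun_cong[OF t(2), of x] by auto
      then show "t \<in> (Pi UNIV (\<lambda>x. {..k x})) \<times> (Pi UNIV (\<lambda>x. {..k x}))" using t by auto
    qed
    moreover have "finite (Pi UNIV (\<lambda>x. {..k x}))"
      using finite_PiE[of UNIV "\<lambda>x. {..k x}"] by (simp add: PiE_UNIV_domain)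
    ultimately show ?thesis by (meson finite_SigmaI finite_subset)
  qed
  define T where "T = Sigma ({1..s} - {j}) (\<lambda>_. P)"
  have finT: "finite T" unfolding T_def using finP by auto
  define B where "B = (\<lambda>r l. {\<omega>\<in>space (M i). J i 0 \<omega> = i \<and> J i 1 \<omega> = r \<and> S i 1 \<omega> = l})"
  define G where "G = (\<lambda>(r, l, l'). {\<omega>\<in>space (M i). \<exists>n. hitF (F1 (J i) (S i)) j n l' \<omega>} \<inter> B r l)"
  define G0 where "G0 = {\<omega>\<in>space (M i). J i 0 \<omega> = i \<and> J i 1 \<omega> = j \<and> S i 1 \<omega> = k}"
  define E where "E = {\<omega>\<in>space (M i). J i 0 \<omega> = i \<and> (\<exists>n. hitF (F0 (J i) (S i)) j n k \<omega>)}"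
  have hm0: "{\<omega>\<in>space (M i). \<exists>n. hitF (F0 (J i) (S i)) j n k \<omega>} \<in> sets (M i)"
    by (rule hit_meas(2)[OF F0_meas[OF ci]])
  have hm1: "{\<omega>\<in>space (M i). \<exists>n. hitF (F1 (J i) (S i)) j n l' \<omega>} \<in> sets (M i)" for l'
    by (rule hit_meas(2)[OF F1_meas[OF ci]])
  have Bm: "B r l \<in> sets (M i)" for r l unfolding B_def by measurable
  have Gm: "G t \<in> sets (M i)" for t using hm1 Bm by (auto simp: G_def split: prod.splits)
  have G0m: "G0 \<in> sets (M i)" unfolding G0_def by measurable
  have Em: "E \<in> sets (M i)"
  proof -
    have "E = {\<omega>\<in>space (M i). J i 0 \<omega> = i} \<inter> {\<omega>\<in>space (M i). \<exists>n. hitF (F0 (J i) (S i)) j n k \<omega>}"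
      by (auto simp: E_def)
    moreover have "{\<omega>\<in>space (M i). J i 0 \<omega> = i} \<in> sets (M i)" by measurable
    ultimately show ?thesis using hm0 by auto
  qed
  have fp1: "first_passage (M i) (J i) (S i) j k = measure (M i) E"
    unfolding fp_char
  proof (rule p.finite_measure_eq_AE[OF _ hm0 Em])
    show "AE \<omega> in M i. (\<omega> \<in> {\<omega>\<in>space (M i). \<exists>n. hitF (F0 (J i) (S i)) j n k \<omega>}) = (\<omega> \<in> E)"
      by (rule AE_mp[OF ai], rule AE_I2) (auto simp: E_def)
  qed
  have Eeq: "E = G0 \<union> (\<Union>t\<in>T. G t)"
  proof (rule set_eqI)
    fix \<omega>
    show "\<omega> \<in> E \<longleftrightarrow> \<omega> \<in> G0 \<union> (\<Union>t\<in>T. G t)"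
    proof (cases "\<omega> \<in> space (M i)")
      case False then show ?thesis by (auto simp: E_def G0_def G_def B_def)
    next
      case w: True
      have hs: "(\<exists>n. hitF (F0 (J i) (S i)) j n k \<omega>) \<longleftrightarrow> (J i 1 \<omega> = j \<and> S i 1 \<omega> = k) \<or>
         (J i 1 \<omega> \<noteq> j \<and> (\<exists>l'. (\<lambda>x. S i 1 \<omega> x + l' x) = k \<and> (\<exists>n. hitF (F1 (J i) (S i)) j n l' \<omega>)))"
        by (rule hit_split) (rule S_mono[OF ci w])
      have J1: "J i 1 \<omega> \<in> {1..s}" using mrcD(4)[OF ci w] .
      show ?thesis
      proof
        assume "\<omega> \<in> E"
        then have h0: "J i 0 \<omega> = i" and hd: "(J i 1 \<omega> = j \<and> S i 1 \<omega> = k) \<or>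
         (J i 1 \<omega> \<noteq> j \<and> (\<exists>l'. (\<lambda>x. S i 1 \<omega> x + l' x) = k \<and> (\<exists>n. hitF (F1 (J i) (S i)) j n l' \<omega>)))"
          using hs by (auto simp: E_def)
        from hd show "\<omega> \<in> G0 \<union> (\<Union>t\<in>T. G t)"
        proof
          assume "J i 1 \<omega> = j \<and> S i 1 \<omega> = k" then show ?thesis using w h0 by (auto simp: G0_def)
        next
          assume "J i 1 \<omega> \<noteq> j \<and> (\<exists>l'. (\<lambda>x. S i 1 \<omega> x + l' x) = k \<and> (\<exists>n. hitF (F1 (J i) (S i)) j n l' \<omega>))"
          then obtain l' where l': "J i 1 \<omega> \<noteq> j" "(\<lambda>x. S i 1 \<omega> x + l' x) = k" "\<exists>n. hitF (F1 (J i) (S i)) j n l' \<omega>" by blast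
          have "(J i 1 \<omega>, S i 1 \<omega>, l') \<in> T" using l' J1 by (auto simp: T_def P_def)
          moreover have "\<omega> \<in> G (J i 1 \<omega>, S i 1 \<omega>, l')" using l' w h0 by (auto simp: G_def B_def)
          ultimately show ?thesis by blast
        qed
      next
        assume "\<omega> \<in> G0 \<union> (\<Union>t\<in>T. G t)"
        then show "\<omega> \<in> E"
        proof
          assume "\<omega> \<in> G0" then show ?thesis using hs by (auto simp: G0_def E_def)
        next
          assume "\<omega> \<in> (\<Union>t\<in>T. G t)"
          then obtain r l l' where t: "(r, l, l') \<in> T" "\<omega> \<in> G (r, l, l')" by auto
          then have "J i 0 \<omega> = i" "J i 1 \<omega> = r" "S i 1 \<omega> = l" "r \<noteq> j" "(\<lambda>x. l x + l' x) = k"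
             "\<exists>n. hitF (F1 (J i) (S i)) j n l' \<omega>"
            by (auto simp: G_def B_def T_def P_def)
          then show ?thesis using hs w unfolding E_def by blast
        qed
      qed
    qed
  qed
  have disj0: "G0 \<inter> (\<Union>t\<in>T. G t) = {}"
    by (auto simp: G0_def G_def B_def T_def)
  have disjT: "disjoint_family_on G T"
    unfolding disjoint_family_on_def
  proof (intro ballI impI)
    fix t1 t2 assume "t1 \<in> T" "t2 \<in> T" "t1 \<noteq> t2"
    obtain r1 l1 l1' r2 l2 l2' where tt: "t1 = (r1, l1, l1')" "t2 = (r2, l2, l2')" by (cases t1, cases t2) auto
    show "G t1 \<inter> G t2 = {}"
    proof (rule equals0I)
      fix \<omega> assume "\<omega> \<in> G t1 \<inter> G t2"
      then obtain n1 n2 where h: "J i 1 \<omega> = r1" "J i 1 \<omega> = r2" "S i 1 \<omega> = l1" "S i 1 \<omega> = l2"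
        "hitF (F1 (J i) (S i)) j n1 l1' \<omega>" "hitF (F1 (J i) (S i)) j n2 l2' \<omega>"
        unfolding tt G_def B_def by auto
      have "n1 = n2" using hit_disj[OF h(5,6)] .
      then have "l1' = l2'" using hit_val h(5,6) by metis
      then show False using h \<open>t1 \<noteq> t2\<close> tt by simp
    qed
  qed
  have mE: "measure (M i) E = measure (M i) G0 + (\<Sum>t\<in>T. measure (M i) (G t))"
  proof -
    have UGm: "(\<Union>t\<in>T. G t) \<in> sets (M i)" using finT Gm by auto
    have "measure (M i) E = measure (M i) G0 + measure (M i) (\<Union>t\<in>T. G t)"
      unfolding Eeq by (rule p.finite_measure_Union[OF G0m UGm disj0])
    also have "measure (M i) (\<Union>t\<in>T. G t) = (\<Sum>t\<in>T. measure (M i) (G t))"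
      by (rule p.finite_measure_finite_Union[OF finT _ disjT]) (use Gm in auto)
    finally show ?thesis .
  qed
  have mG0: "measure (M i) G0 = q i j k" unfolding G0_def by (rule q_eq[OF ci ai])
  have mG: "measure (M i) (G (r, l, l')) = q i r l * first_passage (M r) (J r) (S r) j l'" if "(r, l, l') \<in> T" for r l l'
  proof -
    have r: "r \<in> {1..s}" using that by (auto simp: T_def)
    show ?thesis unfolding fp_char G_def B_def using fp_shift[OF ci chain[OF r] ai start[OF r]] by simp
  qed
  have "(\<Sum>t\<in>T. measure (M i) (G t)) = (\<Sum>(r, p)\<in>T. (case p of (l, l') \<Rightarrow> q i r l * first_passage (M r) (J r) (S r) j l'))"
    by (rule sum.cong) (auto simp: mG)
  also have "\<dots> = (\<Sum>r\<in>{1..s} - {j}. \<Sum>p\<in>P. (case p of (l, l') \<Rightarrow> q i r l * first_passage (M r) (J r) (S r) j l'))"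
    unfolding T_def by (rule sum.Sigma[symmetric]) (use finP in auto)
  also have "\<dots> = (\<Sum>r \<in> {1..s} - {j}. conv (q i r) (first_passage (M r) (J r) (S r) j) k)"
    by (simp add: conv_def P_def)
  finally show ?thesis using fp1 mE mG0 by simp
qed

end
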